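(* Let $\mathcal{H}=(V,E)$ be a hypergraph, and consider the mixed integer linear program with variables $w_R\in[0,1]$ for each $R\in E$ and $t_x\in\{0,1\}$ for each $x\in V$: maximize $\sum_{R\in E}w_R$ subject to (a) for all $x\in V$: $\sum_{R\in E: x\in R}w_R\le t_x+(1-t_x)L$; (b) for all $R\in E$: $w_R\le\sum_{x\in R}t_x$; (c) for all $U,W\in E$ and all $y\in U\setminus W$: $w_W\le 1+\sum_{x\in W\setminus U}t_x-t_y$. Then the optimal objective value of this program is $\kappa(\mathcal{H})$.
   Context: $L$ is a fixed large number (large enough that constraint (a) is vacuous when $t_x=0$, e.g. $L\ge|E|$). $\mathcal{H}[S]$ is the hypergraph with vertex set $S$ and edges $\{S\cap e: e\in E, S\cap e\ne\emptyset\}$; $\mathsf{red}$ removes every edge $e$ contained in another edge $e'\ne e$. $\tau^*$ is the value of a maximum fractional edge packing (equivalently, minimum fractional vertex cover). $\kappa(\mathcal{H})=\max_{S\subseteq V}\tau^*(\mathsf{red}(\mathcal{H}[S]))$. *)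

theory Defs
  imports Main "HOL.Real"
begin

definition hypergraph :: "'a set \<Rightarrow> 'a set set \<Rightarrow> bool" where
  "hypergraph V E \<longleftrightarrow> finite V \<and> E \<subseteq> Pow V"

definition induced_edges :: "'a set set \<Rightarrow> 'a set \<Rightarrow> 'a set set" where
  "induced_edges E S = {S \<inter> e | e. e \<in> E \<and> S \<inter> e \<noteq> {}}"

definition red_edges :: "'a set set \<Rightarrow> 'a set set" where
  "red_edges F = {e \<in> F. \<not> (\<exists>e'\<in>F. e' \<noteq> e \<and> e \<subseteq> e')}"

definition frac_edge_packing :: "'a set \<Rightarrow> 'a set set \<Rightarrow> ('a set \<Rightarrow> real) \<Rightarrow> bool" where
  "frac_edge_packing V F w \<longleftrightarrow>
     (\<forall>e\<in>F. 0 \<le> w e) \<and> (\<forall>v\<in>V. (\<Sum>e\<in>{e\<in>F. v \<in> e}. w e) \<le> 1)"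

definition tau_star :: "'a set \<Rightarrow> 'a set set \<Rightarrow> real" where
  "tau_star V F = Sup {(\<Sum>e\<in>F. w e) | w. frac_edge_packing V F w}"

definition kappa :: "'a set \<Rightarrow> 'a set set \<Rightarrow> real" where
  "kappa V E = Max {tau_star S (red_edges (induced_edges E S)) | S. S \<subseteq> V}"

definition milp_feasible ::
  "real \<Rightarrow> 'a set \<Rightarrow> 'a set set \<Rightarrow> ('a set \<Rightarrow> real) \<Rightarrow> ('a \<Rightarrow> real) \<Rightarrow> bool" where
  "milp_feasible L V E w t \<longleftrightarrow>
     (\<forall>R\<in>E. 0 \<le> w R \<and> w R \<le> 1) \<and>
     (\<forall>x\<in>V. t x \<in> {0, 1}) \<and>
     (\<forall>x\<in>V. (\<Sum>R\<in>{R\<in>E. x \<in> R}. w R) \<le> t x + (1 - t x) * L) \<and>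
     (\<forall>R\<in>E. w R \<le> (\<Sum>x\<in>R. t x)) \<and>
     (\<forall>U\<in>E. \<forall>W\<in>E. \<forall>y\<in>U - W. w W \<le> 1 + (\<Sum>x\<in>W - U. t x) - t y)"

end

theory Submission imports Defs "HOL-Analysis.Analysis" begin

lemma compactK: "compact (Pi\<^sub>E UNIV (\<lambda>e::'b. if e \<in> F then {0..1::real} else {0}))"
proof -
  have "compactin (product_topology (\<lambda>_. euclidean) UNIV) (PiE UNIV (\<lambda>e::'b. if e \<in> F then {0..1::real} else {0}))"
    by (subst compactin_PiE) auto
  then show ?thesis by (simp add: euclidean_product_topology)
qed

lemma closedK: "closed {w::'b \<Rightarrow> real. \<forall>v\<in>V. (\<Sum>e\<in>G v. w e) \<le> 1}"
proof -
  have "{w::'b \<Rightarrow> real. \<forall>v\<in>V. (\<Sum>e\<in>G v. w e) \<le> 1} = (\<Inter>v\<in>V. {w. (\<Sum>e\<in>G v. w e) \<le> 1})" by auto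
  moreover have "closed {w::'b \<Rightarrow> real. (\<Sum>e\<in>G v. w e) \<le> 1}" for v
    by (intro closed_Collect_le continuous_on_sum continuous_on_const) (auto intro: continuous_on_product_coordinates)
  ultimately show ?thesis by auto
qed

lemma packing_le1:
  assumes "frac_edge_packing V F w" "finite F" "e \<in> F" "e \<noteq> {}" "e \<subseteq> V"
  shows "w e \<le> 1"
proof -
  obtain v where v: "v \<in> e" using assms by auto
  have "w e \<le> (\<Sum>e\<in>{e\<in>F. v \<in> e}. w e)"
    by (rule member_le_sum) (use assms v in \<open>auto simp: frac_edge_packing_def\<close>)
  also have "\<dots> \<le> 1" using assms v by (auto simp: frac_edge_packing_def)
  finally show ?thesis .
qed

lemma tau_attained:
  fixes V :: "'a set" and F :: "'a set set"
  assumes "finite F" "\<forall>e\<in>F. e \<noteq> {} \<and> e \<subseteq> V"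
  shows "\<exists>w. frac_edge_packing V F w \<and> tau_star V F = (\<Sum>e\<in>F. w e)
            \<and> (\<forall>w'. frac_edge_packing V F w' \<longrightarrow> (\<Sum>e\<in>F. w' e) \<le> (\<Sum>e\<in>F. w e))"
proof -
  define K where "K = Pi\<^sub>E UNIV (\<lambda>e::'a set. if e \<in> F then {0..1::real} else {0})
     \<inter> {w. \<forall>v\<in>V. (\<Sum>e\<in>{e\<in>F. v \<in> e}. w e) \<le> 1}"
  have cK: "compact K" unfolding K_def by (intro compact_Int_closed compactK closedK)
  have nK: "(\<lambda>_. 0) \<in> K" unfolding K_def by auto
  have ct: "continuous_on K (\<lambda>w. \<Sum>e\<in>F. w e)"
    by (intro continuous_on_sum) (auto intro: continuous_on_subset[OF continuous_on_product_coordinates])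
  obtain w0 where w0: "w0 \<in> K" "\<And>y. y \<in> K \<Longrightarrow> (\<Sum>e\<in>F. y e) \<le> (\<Sum>e\<in>F. w0 e)"
    using continuous_attains_sup[OF cK _ ct] nK by blast
  have p0: "frac_edge_packing V F w0"
    using w0(1) unfolding K_def frac_edge_packing_def PiE_UNIV_domain by (auto simp: Pi_iff split: if_splits)
  have le: "(\<Sum>e\<in>F. w' e) \<le> (\<Sum>e\<in>F. w0 e)" if p: "frac_edge_packing V F w'" for w'
  proof -
    define w'' where "w'' = (\<lambda>e. if e \<in> F then w' e else 0)"
    have "w'' \<in> K"
      unfolding K_def PiE_UNIV_domain
    proof (intro IntI CollectI ballI Pi_I)
      fix e :: "'a set"
      show "w'' e \<in> (if e \<in> F then {0..1} else {0})"
        using p packing_le1[OF p assms(1), of e] assms(2) unfolding w''_def frac_edge_packing_def by auto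
    next
      fix v assume "v \<in> V"
      have "(\<Sum>e\<in>{e\<in>F. v \<in> e}. w'' e) = (\<Sum>e\<in>{e\<in>F. v \<in> e}. w' e)"
        unfolding w''_def by (rule sum.cong) auto
      then show "(\<Sum>e\<in>{e\<in>F. v \<in> e}. w'' e) \<le> 1" using p \<open>v \<in> V\<close> unfolding frac_edge_packing_def by auto
    qed
    moreover have "(\<Sum>e\<in>F. w'' e) = (\<Sum>e\<in>F. w' e)" unfolding w''_def by (rule sum.cong) auto
    ultimately show ?thesis using w0(2) by metis
  qed
  have "tau_star V F = (\<Sum>e\<in>F. w0 e)"
    unfolding tau_star_def by (rule cSup_eq_maximum) (use p0 le in auto)
  then show ?thesis using p0 le by blast
qed

theorem theoremA2:
  fixes V :: "'a set" and E :: "'a set set" and L :: real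
  assumes "hypergraph V E"
    and "real (card E) \<le> L"
  shows "(\<exists>w t. milp_feasible L V E w t \<and> (\<Sum>R\<in>E. w R) = kappa V E)
       \<and> (\<forall>w t. milp_feasible L V E w t \<longrightarrow> (\<Sum>R\<in>E. w R) \<le> kappa V E)"
proof -
  have fV: "finite V" and EV: "E \<subseteq> Pow V" using assms(1) unfolding hypergraph_def by auto
  have fE: "finite E" using fV EV by (meson finite_Pow_iff finite_subset)
  have fR: "finite R" if "R \<in> E" for R using that EV fV by (meson PowD finite_subset subsetD)
  define T where "T = {tau_star S (red_edges (induced_edges E S)) | S. S \<subseteq> V}"
  have T_eq: "T = (\<lambda>S. tau_star S (red_edges (induced_edges E S))) ` Pow V" unfolding T_def by auto
  have fT: "finite T" unfolding T_eq using fV by simp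
  have neT: "T \<noteq> {}" unfolding T_eq by blast
  have kT: "kappa V E = Max T" unfolding kappa_def T_def by simp
  have finF: "finite (red_edges (induced_edges E S))" for S
  proof -
    have "induced_edges E S = (\<lambda>e. S \<inter> e) ` {e\<in>E. S \<inter> e \<noteq> {}}" unfolding induced_edges_def by auto
    then have "finite (induced_edges E S)" using fE by simp
    then show ?thesis unfolding red_edges_def by simp
  qed
  have propF: "\<forall>e\<in>red_edges (induced_edges E S). e \<noteq> {} \<and> e \<subseteq> S" for S
    unfolding red_edges_def induced_edges_def by auto
  have part2: "(\<Sum>R\<in>E. w R) \<le> kappa V E" if feas: "milp_feasible L V E w t" for w t
  proof -
    define S where "S = {x\<in>V. t x = 1}"
    define F where "F = red_edges (induced_edges E S)"
    have fF: "finite F" unfolding F_def by (rule finF)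
    have w01: "\<And>R. R \<in> E \<Longrightarrow> 0 \<le> w R \<and> w R \<le> 1"
      and t01: "\<And>x. x \<in> V \<Longrightarrow> t x \<in> {0,1}"
      and ca: "\<And>x. x \<in> V \<Longrightarrow> (\<Sum>R\<in>{R\<in>E. x \<in> R}. w R) \<le> t x + (1 - t x) * L"
      and cb: "\<And>R. R \<in> E \<Longrightarrow> w R \<le> (\<Sum>x\<in>R. t x)"
      and cc: "\<And>U W y. U \<in> E \<Longrightarrow> W \<in> E \<Longrightarrow> y \<in> U - W \<Longrightarrow> w W \<le> 1 + (\<Sum>x\<in>W - U. t x) - t y"
      using feas unfolding milp_feasible_def by auto
    have zero: "w R = 0" if R: "R \<in> E" "R \<inter> S \<notin> F" for R
    proof (cases "R \<inter> S = {}")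
      case True
      have "(\<Sum>x\<in>R. t x) = 0"
      proof (rule sum.neutral, rule ballI)
        fix x assume x: "x \<in> R"
        then have "x \<in> V" using R EV by auto
        then show "t x = 0" using t01[of x] True x unfolding S_def by auto
      qed
      then show ?thesis using cb[OF R(1)] w01[OF R(1)] by auto
    next
      case False
      then have "R \<inter> S \<in> induced_edges E S" using R unfolding induced_edges_def by auto
      then obtain e' where e': "e' \<in> induced_edges E S" "e' \<noteq> R \<inter> S" "R \<inter> S \<subseteq> e'"
        using R(2) unfolding F_def red_edges_def by auto
      then obtain U where U: "U \<in> E" "e' = S \<inter> U" unfolding induced_edges_def by auto
      obtain y where y: "y \<in> S \<inter> U" "y \<notin> R" using e' U by auto
      have "(\<Sum>x\<in>R - U. t x) = 0"
      proof (rule sum.neutral, rule ballI)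
        fix x assume x: "x \<in> R - U"
        then have "x \<in> V" using R EV by auto
        moreover have "x \<notin> S" using x e' U by auto
        ultimately show "t x = 0" using t01[of x] unfolding S_def by auto
      qed
      moreover have "t y = 1" using y unfolding S_def by auto
      ultimately have "w R \<le> 0" using cc[OF U(1) R(1), of y] y by auto
      then show ?thesis using w01[OF R(1)] by auto
    qed
    define w' where "w' = (\<lambda>f. \<Sum>R\<in>{R\<in>E. R \<inter> S = f}. w R)"
    have grp: "(\<Sum>f\<in>{f\<in>F. P f}. w' f) = (\<Sum>R\<in>{R\<in>E. R \<inter> S \<in> F \<and> P (R \<inter> S)}. w R)" for P
    proof -
      have "(\<Sum>R\<in>{R\<in>E. R \<inter> S \<in> F \<and> P (R \<inter> S)}. w R)
          = (\<Sum>f\<in>{f\<in>F. P f}. \<Sum>R\<in>{x\<in>{R\<in>E. R \<inter> S \<in> F \<and> P (R \<inter> S)}. x \<inter> S = f}. w R)"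
        by (rule sum.group[symmetric]) (use fE fF in auto)
      also have "\<dots> = (\<Sum>f\<in>{f\<in>F. P f}. w' f)"
        unfolding w'_def by (rule sum.cong) (auto intro!: sum.cong)
      finally show ?thesis by simp
    qed
    have pack: "frac_edge_packing S F w'"
      unfolding frac_edge_packing_def
    proof (intro conjI ballI)
      fix e assume "e \<in> F"
      show "0 \<le> w' e" unfolding w'_def by (rule sum_nonneg) (use w01 in auto)
    next
      fix v assume v: "v \<in> S"
      have "(\<Sum>e\<in>{e\<in>F. v \<in> e}. w' e) = (\<Sum>R\<in>{R\<in>E. R \<inter> S \<in> F \<and> v \<in> R \<inter> S}. w R)"
        by (rule grp)
      also have "\<dots> \<le> (\<Sum>R\<in>{R\<in>E. v \<in> R}. w R)"
        by (rule sum_mono2) (use fE w01 in auto)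
      also have "\<dots> \<le> 1" using ca[of v] v unfolding S_def by auto
      finally show "(\<Sum>e\<in>{e\<in>F. v \<in> e}. w' e) \<le> 1" .
    qed
    have "(\<Sum>R\<in>E. w R) = (\<Sum>R\<in>{R\<in>E. R \<inter> S \<in> F \<and> True}. w R)"
      by (rule sum.mono_neutral_right) (use fE zero in auto)
    also have "\<dots> = (\<Sum>f\<in>{f\<in>F. True}. w' f)" by (rule grp[symmetric])
    also have "\<dots> = (\<Sum>f\<in>F. w' f)" by simp
    also have "\<dots> \<le> tau_star S F"
    proof -
      obtain w1 where "tau_star S F = (\<Sum>e\<in>F. w1 e)"
        "\<forall>w'. frac_edge_packing S F w' \<longrightarrow> (\<Sum>e\<in>F. w' e) \<le> (\<Sum>e\<in>F. w1 e)"
        using tau_attained[OF fF propF[of S, folded F_def]] by blast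
      then show ?thesis using pack by simp
    qed
    also have "\<dots> \<le> kappa V E" unfolding kT F_def
      by (rule Max_ge[OF fT]) (auto simp: T_def S_def)
    finally show ?thesis .
  qed
  have part1: "\<exists>w t. milp_feasible L V E w t \<and> (\<Sum>R\<in>E. w R) = kappa V E"
  proof -
    have "kappa V E \<in> T" unfolding kT by (rule Max_in[OF fT neT])
    then obtain S where S: "S \<subseteq> V" "kappa V E = tau_star S (red_edges (induced_edges E S))"
      unfolding T_def by auto
    define F where "F = red_edges (induced_edges E S)"
    obtain w0 where w0: "frac_edge_packing S F w0" "tau_star S F = (\<Sum>e\<in>F. w0 e)"
      using tau_attained[OF finF[of S] propF[of S]] unfolding F_def by blast
    have Fsub: "F \<subseteq> induced_edges E S" unfolding F_def red_edges_def by auto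
    have Fne: "\<And>f. f \<in> F \<Longrightarrow> f \<noteq> {} \<and> f \<subseteq> S" using propF[of S] unfolding F_def by auto
    have w0b: "\<And>f. f \<in> F \<Longrightarrow> 0 \<le> w0 f \<and> w0 f \<le> 1"
      using w0(1) packing_le1[OF w0(1) finF[of S, folded F_def]] Fne unfolding frac_edge_packing_def by auto
    define g where "g = (\<lambda>f. SOME R. R \<in> E \<and> R \<inter> S = f)"
    have g: "g f \<in> E \<and> g f \<inter> S = f" if "f \<in> F" for f
    proof -
      have "\<exists>R. R \<in> E \<and> R \<inter> S = f" using Fsub that unfolding induced_edges_def by auto
      then show ?thesis unfolding g_def by (rule someI_ex)
    qed
    have injg: "inj_on g F" by (rule inj_onI) (metis g)
    define w where "w = (\<lambda>R. if R \<in> g ` F then w0 (R \<inter> S) else 0)"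
    define t where "t = (\<lambda>x. if x \<in> S then 1 else (0::real))"
    have wsum: "(\<Sum>R\<in>{R\<in>E. P R}. w R) = (\<Sum>f\<in>{f\<in>F. P (g f)}. w0 f)" for P
    proof -
      have "(\<Sum>R\<in>{R\<in>E. P R}. w R) = (\<Sum>R\<in>g ` {f\<in>F. P (g f)}. w0 (R \<inter> S))"
        by (rule sum.mono_neutral_cong_right) (use fE g in \<open>auto simp: w_def\<close>)
      also have "\<dots> = (\<Sum>f\<in>{f\<in>F. P (g f)}. w0 (g f \<inter> S))"
      proof -
        have "inj_on g {f\<in>F. P (g f)}" by (rule inj_on_subset[OF injg]) auto
        from sum.reindex[OF this, of "\<lambda>R. w0 (R \<inter> S)"] show ?thesis by (simp add: o_def)
      qed
      also have "\<dots> = (\<Sum>f\<in>{f\<in>F. P (g f)}. w0 f)" by (rule sum.cong) (use g in auto)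
      finally show ?thesis .
    qed
    have wb: "0 \<le> w R \<and> w R \<le> 1" for R using w0b g by (auto simp: w_def)
    have tnn: "\<And>A. 0 \<le> (\<Sum>x\<in>A. t x)" by (rule sum_nonneg) (auto simp: t_def)
    have tge1: "1 \<le> (\<Sum>x\<in>A. t x)" if "finite A" "z \<in> A" "z \<in> S" for A z
    proof -
      have "t z \<le> (\<Sum>x\<in>A. t x)" by (rule member_le_sum) (use that in \<open>auto simp: t_def\<close>)
      then show ?thesis using that by (auto simp: t_def)
    qed
    have feas: "milp_feasible L V E w t"
      unfolding milp_feasible_def
    proof (intro conjI ballI)
      fix R assume "R \<in> E" show "0 \<le> w R" "w R \<le> 1" using wb by auto
    next
      fix x assume "x \<in> V" show "t x \<in> {0,1}" by (auto simp: t_def)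
    next
      fix x assume x: "x \<in> V"
      show "(\<Sum>R\<in>{R\<in>E. x \<in> R}. w R) \<le> t x + (1 - t x) * L"
      proof (cases "x \<in> S")
        case True
        have "(\<Sum>R\<in>{R\<in>E. x \<in> R}. w R) = (\<Sum>f\<in>{f\<in>F. x \<in> g f}. w0 f)" by (rule wsum)
        also have "\<dots> = (\<Sum>f\<in>{f\<in>F. x \<in> f}. w0 f)"
          using g True by (intro sum.cong) auto
        also have "\<dots> \<le> 1" using w0(1) True unfolding frac_edge_packing_def by auto
        finally show ?thesis using True by (simp add: t_def)
      next
        case False
        have "(\<Sum>R\<in>{R\<in>E. x \<in> R}. w R) \<le> of_nat (card {R\<in>E. x \<in> R}) * 1"
          by (rule sum_bounded_above) (use wb in auto)
        also have "\<dots> \<le> real (card E)" using card_mono[OF fE, of "{R\<in>E. x \<in> R}"] by auto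
        finally show ?thesis using False assms(2) by (simp add: t_def)
      qed
    next
      fix R assume R: "R \<in> E"
      show "w R \<le> (\<Sum>x\<in>R. t x)"
      proof (cases "R \<in> g ` F")
        case True
        then obtain f where f: "f \<in> F" "R = g f" by auto
        have "R \<inter> S = f" using g[OF f(1)] f(2) by simp
        then obtain z where "z \<in> R \<inter> S" using Fne[OF f(1)] by blast
        then have "1 \<le> (\<Sum>x\<in>R. t x)" using tge1[OF fR[OF R]] by auto
        then show ?thesis using wb[of R] by auto
      next
        case False then show ?thesis using tnn by (simp add: w_def)
      qed
    next
      fix U W y assume U: "U \<in> E" and W: "W \<in> E" and y: "y \<in> U - W"
      show "w W \<le> 1 + (\<Sum>x\<in>W - U. t x) - t y"
      proof (cases "W \<in> g ` F")
        case False
        then show ?thesis using tnn[of "W - U"] by (auto simp: w_def t_def)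
      next
        case True
        then obtain f where f: "f \<in> F" "W = g f" by auto
        show ?thesis
        proof (cases "y \<in> S \<and> (W - U) \<inter> S = {}")
          case False
          have "t y \<le> 1" by (simp add: t_def)
          show ?thesis
          proof (cases "y \<in> S")
            case False
            then show ?thesis using tnn[of "W - U"] wb[of W] by (simp add: t_def)
          next
            case True
            with \<open>\<not> (y \<in> S \<and> (W - U) \<inter> S = {})\<close> obtain z where "z \<in> W - U" "z \<in> S" by auto
            then have "1 \<le> (\<Sum>x\<in>W - U. t x)" using tge1[of "W - U" z] fR[OF W] by auto
            then show ?thesis using wb[of W] \<open>t y \<le> 1\<close> by linarith
          qed
        next
          case True
          have fW: "W \<inter> S = f" using g f by auto
          have "S \<inter> U \<in> induced_edges E S" using U y True unfolding induced_edges_def by auto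
          moreover have "S \<inter> U \<noteq> f" using y True fW by auto
          moreover have "f \<subseteq> S \<inter> U" using True fW by auto
          ultimately have False using f(1) unfolding F_def red_edges_def by blast
          then show ?thesis ..
        qed
      qed
    qed
    have "(\<Sum>R\<in>E. w R) = (\<Sum>f\<in>F. w0 f)" using wsum[of "\<lambda>_. True"] by simp
    then show ?thesis using feas w0(2) S(2) unfolding F_def by auto
  qed
  show ?thesis using part1 part2 by blast
qed

end
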